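(* Let $(\mu_n)$ be an SI-martingale on $\mathbb{R}^d$ which is either of $(\mathcal{F},\tau,\zeta)$-cutout type or of $(\mathcal{F},\tau,\zeta)$-cell type. Let $(\mathcal{M},\nu)$ be a metric measure space, let $\{\Pi_t:\mathcal{M}\to\mathbb{R}^d\}_{t\in\Gamma}$ be a family of Borel maps parametrized by a metric space $(\Gamma,d)$, and set $\eta_t=\Pi_t\nu$ (push-forward). Suppose there are constants $0<\gamma_0,C<\infty$ such that $$\nu\big(\Pi_t^{-1}(\Lambda)\,\Delta\,\Pi_u^{-1}(\Lambda)\big)\le C\, d(t,u)^{\gamma_0}\quad\text{for all }\Lambda\in\mathcal{F},\ t,u\in\Gamma .$$ Then $$\sup_{t\neq u\in\Gamma,\ n\ge N_0}\frac{\left|\int\mu_n\,d\eta_t-\int\mu_n\,d\eta_u\right|}{2^{(\tau+\zeta)n}\,d(t,u)^{\gamma_0}}\le C'<\infty,$$ where $C'$ is a deterministic constant and $N_0$ is the random variable appearing in the definition of cutout type (respectively cell type).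
   Context: An SI-martingale on $\mathbb{R}^d$ is a sequence $(\mu_n)_{n\ge0}$ of random functions $\mu_n:\mathbb{R}^d\to[0,\infty)$ (identified with the measures $\mu_n(x)\,dx$) such that: (SI1) $\mu_0$ is a deterministic bounded function with bounded support; (SI2) there is an increasing filtration $(\mathcal{B}_n)$ with $\mu_n$ $\mathcal{B}_n$-measurable and $\mathbb{E}(\mu_{n+1}(x)\mid\mathcal{B}_n)=\mu_n(x)$ for all $x\in\mathbb{R}^d$, $n\in\mathbb{N}$; (SI3) there is $C<\infty$ with $\mu_{n+1}(x)\le C\mu_n(x)$ for all $x,n$; (SI4) there is $C<\infty$ such that for any $(C2^{-n})$-separated family $\mathcal{Q}$ of half-open dyadic cubes of side length $2^{-(n+1)}$, the restrictions $\{\mu_{n+1}|_Q\}_{Q\in\mathcal{Q}}$ are independent conditionally on $\mathcal{B}_n$. Let $\mathcal{F}$ be a family of Borel subsets of a fixed ball $B(0,R)\subset\mathbb{R}^d$, and $\tau,\zeta>0$. $(\mu_n)$ is of $(\mathcal{F},\tau,\zeta)$-cutout type if there are $C>0$ and a set $\Omega\in\mathcal{F}$ such that $\mu_n=2^{\tau n}\mathbf{1}_{A_n}$ with $A_n=\Omega\setminus\bigcup_{j=1}^{M_n}\Lambda^{(n)}_j$ for a random finite subfamily $\{\Lambda^{(n)}_j\}_{j=1}^{M_n}$ of $\mathcal{F}$, and there is an a.s. finite random variable $N_0$ with $M_n\le C2^{\zeta n}$ for all $n\ge N_0$. $(\mu_n)$ is of $(\mathcal{F},\tau,\zeta)$-cell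 type if there is $C>0$ such that $\mu_n=\sum_{j=1}^{M_n}c^{(n)}_j\mathbf{1}[F^{(n)}_j]$, where $\{F^{(n)}_j\}_{j=1}^{M_n}$ is a random subfamily of $\mathcal{F}$, the random variables satisfy $0\le c^{(n)}_j\le C2^{\tau n}$ for all $j,n$ a.s., and a.s. there is $N_0$ with $M_n\le C2^{\zeta n}$ for all $n\ge N_0$. $A\Delta B$ denotes symmetric difference. *)

theory Defs
  imports "HOL-Probability.Probability"
begin

definition dyadic_cube :: "nat \<Rightarrow> ('a::euclidean_space \<Rightarrow> int) \<Rightarrow> 'a set" where
  "dyadic_cube m k = {x. \<forall>i\<in>Basis. real_of_int (k i) / 2 ^ m \<le> x \<bullet> i
                              \<and> x \<bullet> i < (real_of_int (k i) + 1) / 2 ^ m}"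

definition dyadic_cubes :: "nat \<Rightarrow> 'a::euclidean_space set set" where
  "dyadic_cubes m = {dyadic_cube m k | k. True}"

definition separated_family :: "real \<Rightarrow> 'a::metric_space set set \<Rightarrow> bool" where
  "separated_family r Q \<longleftrightarrow> (\<forall>Q1\<in>Q. \<forall>Q2\<in>Q. Q1 \<noteq> Q2 \<longrightarrow> r \<le> setdist Q1 Q2)"

definition restr_sigma :: "'w measure \<Rightarrow> ('a \<Rightarrow> 'w \<Rightarrow> real) \<Rightarrow> 'a set \<Rightarrow> 'w set set" where
  "restr_sigma M f Q = sigma_sets (space M) {f x -` A \<inter> space M | x A. x \<in> Q \<and> A \<in> sets borel}"

definition cond_indep_family ::
  "'w measure \<Rightarrow> 'w measure \<Rightarrow> ('i \<Rightarrow> 'w set set) \<Rightarrow> 'i set \<Rightarrow> bool" where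
  "cond_indep_family M F S I \<longleftrightarrow>
     (\<forall>J. J \<subseteq> I \<longrightarrow> finite J \<longrightarrow> J \<noteq> {} \<longrightarrow>
       (\<forall>A. (\<forall>j\<in>J. A j \<in> S j) \<longrightarrow>
          (AE \<omega> in M. real_cond_exp M F (indicator (\<Inter>j\<in>J. A j)) \<omega>
                   = (\<Prod>j\<in>J. real_cond_exp M F (indicator (A j)) \<omega>))))"

definition SI_martingale ::
  "'w measure \<Rightarrow> (nat \<Rightarrow> 'w measure) \<Rightarrow> (nat \<Rightarrow> 'w \<Rightarrow> 'a::euclidean_space \<Rightarrow> real) \<Rightarrow> bool" where
  "SI_martingale M B mu \<longleftrightarrow>
     prob_space M \<and>
     (\<forall>n \<omega> x. \<omega> \<in> space M \<longrightarrow> 0 \<le> mu n \<omega> x) \<and>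
     \<comment> \<open>SI1\<close>
     (\<exists>f. (\<forall>\<omega>\<in>space M. mu 0 \<omega> = f) \<and> (\<exists>b. \<forall>x. \<bar>f x\<bar> \<le> b) \<and> bounded {x. f x \<noteq> 0}) \<and>
     \<comment> \<open>SI2\<close>
     (\<forall>n. subalgebra M (B n)) \<and> (\<forall>n m. n \<le> m \<longrightarrow> sets (B n) \<subseteq> sets (B m)) \<and>
     (\<forall>n x. (\<lambda>\<omega>. mu n \<omega> x) \<in> borel_measurable (B n)) \<and>
     (\<forall>n x. AE \<omega> in M. real_cond_exp M (B n) (\<lambda>\<omega>. mu (Suc n) \<omega> x) \<omega> = mu n \<omega> x) \<and>
     \<comment> \<open>SI3\<close>
     (\<exists>C. \<forall>n \<omega> x. \<omega> \<in> space M \<longrightarrow> mu (Suc n) \<omega> x \<le> C * mu n \<omega> x) \<and>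
     \<comment> \<open>SI4\<close>
     (\<exists>C. \<forall>n Q. Q \<subseteq> dyadic_cubes (Suc n) \<longrightarrow> separated_family (C / 2 ^ n) Q \<longrightarrow>
         cond_indep_family M (B n) (\<lambda>Q. restr_sigma M (\<lambda>x \<omega>. mu (Suc n) \<omega> x) Q) Q)"

definition cutout_type ::
  "'w measure \<Rightarrow> 'a set set \<Rightarrow> real \<Rightarrow> real \<Rightarrow> (nat \<Rightarrow> 'w \<Rightarrow> 'a \<Rightarrow> real) \<Rightarrow> ('w \<Rightarrow> nat) \<Rightarrow> bool" where
  "cutout_type M F \<tau> \<zeta> mu N0 \<longleftrightarrow>
     N0 \<in> measurable M (count_space UNIV) \<and>
     (\<exists>C>0. \<exists>\<Omega>\<in>F. \<exists>(Lam :: nat \<Rightarrow> 'w \<Rightarrow> nat \<Rightarrow> 'a set) (Mn :: nat \<Rightarrow> 'w \<Rightarrow> nat).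
        (\<forall>n. \<forall>\<omega>\<in>space M. (\<forall>j\<in>{1..Mn n \<omega>}. Lam n \<omega> j \<in> F) \<and>
              mu n \<omega> = (\<lambda>x. 2 powr (\<tau> * real n) *
                 indicator (\<Omega> - (\<Union>j\<in>{1..Mn n \<omega>}. Lam n \<omega> j)) x)) \<and>
        (AE \<omega> in M. \<forall>n\<ge>N0 \<omega>. real (Mn n \<omega>) \<le> C * 2 powr (\<zeta> * real n)))"

definition cell_type ::
  "'w measure \<Rightarrow> 'a set set \<Rightarrow> real \<Rightarrow> real \<Rightarrow> (nat \<Rightarrow> 'w \<Rightarrow> 'a \<Rightarrow> real) \<Rightarrow> ('w \<Rightarrow> nat) \<Rightarrow> bool" where
  "cell_type M F \<tau> \<zeta> mu N0 \<longleftrightarrow>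
     (\<exists>C>0. \<exists>(Fm :: nat \<Rightarrow> 'w \<Rightarrow> nat \<Rightarrow> 'a set) (c :: nat \<Rightarrow> 'w \<Rightarrow> nat \<Rightarrow> real) (Mn :: nat \<Rightarrow> 'w \<Rightarrow> nat).
        (\<forall>n. \<forall>\<omega>\<in>space M. (\<forall>j\<in>{1..Mn n \<omega>}. Fm n \<omega> j \<in> F) \<and>
              mu n \<omega> = (\<lambda>x. \<Sum>j\<in>{1..Mn n \<omega>}. c n \<omega> j * indicator (Fm n \<omega> j) x)) \<and>
        (AE \<omega> in M. \<forall>n j. 0 \<le> c n \<omega> j \<and> c n \<omega> j \<le> C * 2 powr (\<tau> * real n)) \<and>
        (AE \<omega> in M. \<forall>n\<ge>N0 \<omega>. real (Mn n \<omega>) \<le> C * 2 powr (\<zeta> * real n)))"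

end

theory Submission imports Defs begin
definition sdf :: "'m measure \<Rightarrow> ('m \<Rightarrow> 'a) \<Rightarrow> ('m \<Rightarrow> 'a) \<Rightarrow> 'a set \<Rightarrow> 'm set" where
 "sdf \<nu> P Q S = (P -` S \<inter> space \<nu> - Q -` S) \<union> (Q -` S \<inter> space \<nu> - P -` S)"

lemma int_ind:
  assumes "S \<in> sets borel" "P \<in> borel_measurable \<nu>"
  shows "integral\<^sup>L (distr \<nu> borel P) (indicator S) = measure \<nu> (P -` S \<inter> space \<nu>)"
  using assms by (simp add: measure_distr)

lemma sdf_sets: assumes "S \<in> sets borel" "P \<in> borel_measurable \<nu>" "Q \<in> borel_measurable \<nu>"
  shows "sdf \<nu> P Q S \<in> sets \<nu>"
proof -
  have a: "P -` S \<inter> space \<nu> \<in> sets \<nu>" "Q -` S \<inter> space \<nu> \<in> sets \<nu>" using assms measurable_sets by blast+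
  have "sdf \<nu> P Q S = (P -` S \<inter> space \<nu> - (Q -` S \<inter> space \<nu>)) \<union> (Q -` S \<inter> space \<nu> - (P -` S \<inter> space \<nu>))"
    unfolding sdf_def by blast
  then show ?thesis using a by auto
qed

lemma diff_le:
  assumes "finite_measure \<nu>" "S \<in> sets borel" "P \<in> borel_measurable \<nu>" "Q \<in> borel_measurable \<nu>"
  shows "\<bar>measure \<nu> (P -` S \<inter> space \<nu>) - measure \<nu> (Q -` S \<inter> space \<nu>)\<bar> \<le> measure \<nu> (sdf \<nu> P Q S)"
proof -
  interpret finite_measure \<nu> by fact
  have a: "P -` S \<inter> space \<nu> \<in> sets \<nu>" "Q -` S \<inter> space \<nu> \<in> sets \<nu>" using assms measurable_sets by blast+
  have s: "sdf \<nu> P Q S \<in> sets \<nu>" using sdf_sets assms by blast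
  have 1: "measure \<nu> (P -` S \<inter> space \<nu>) \<le> measure \<nu> (Q -` S \<inter> space \<nu>) + measure \<nu> (sdf \<nu> P Q S)"
  proof -
    have "measure \<nu> (P -` S \<inter> space \<nu>) \<le> measure \<nu> ((Q -` S \<inter> space \<nu>) \<union> sdf \<nu> P Q S)"
      by (rule finite_measure_mono) (use a s in \<open>auto simp: sdf_def\<close>)
    also have "\<dots> \<le> measure \<nu> (Q -` S \<inter> space \<nu>) + measure \<nu> (sdf \<nu> P Q S)" by (rule measure_Un_le) (use a s in auto)
    finally show ?thesis .
  qed
  have 2: "measure \<nu> (Q -` S \<inter> space \<nu>) \<le> measure \<nu> (P -` S \<inter> space \<nu>) + measure \<nu> (sdf \<nu> P Q S)"
  proof -
    have "measure \<nu> (Q -` S \<inter> space \<nu>) \<le> measure \<nu> ((P -` S \<inter> space \<nu>) \<union> sdf \<nu> P Q S)"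
      by (rule finite_measure_mono) (use a s in \<open>auto simp: sdf_def\<close>)
    also have "\<dots> \<le> measure \<nu> (P -` S \<inter> space \<nu>) + measure \<nu> (sdf \<nu> P Q S)" by (rule measure_Un_le) (use a s in auto)
    finally show ?thesis .
  qed
  show ?thesis using 1 2 by linarith
qed

lemma final_arith:
  fixes X a b K \<delta> \<tau> \<zeta> :: real
  assumes "X \<le> a * b * K * \<delta>" "a = 2 powr (\<tau> * real n)" "b = 2 powr (\<zeta> * real n)" "0 < \<delta>"
  shows "X / (2 powr ((\<tau> + \<zeta>) * real n) * \<delta>) \<le> K"
proof -
  have e: "2 powr ((\<tau> + \<zeta>) * real n) = a * b" using assms by (simp add: distrib_right powr_add)
  have "0 < a * b * \<delta>" using assms by simp
  then show ?thesis using assms(1) unfolding e by (simp add: pos_divide_le_eq mult.commute mult.left_commute)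
qed

theorem proposition6p1:
  fixes M :: "'w measure" and B :: "nat \<Rightarrow> 'w measure"
    and mu :: "nat \<Rightarrow> 'w \<Rightarrow> 'a::euclidean_space \<Rightarrow> real"
    and F :: "'a set set" and R \<tau> \<zeta> :: real and N0 :: "'w \<Rightarrow> nat"
    and \<nu> :: "'m::metric_space measure"
    and Proj :: "'g::metric_space \<Rightarrow> 'm \<Rightarrow> 'a"
    and \<gamma>\<^sub>0 C :: real
  assumes SI: "SI_martingale M B mu"
    and F_borel: "F \<subseteq> sets borel" and F_ball: "\<forall>\<Lambda>\<in>F. \<Lambda> \<subseteq> ball 0 R"
    and \<tau>: "0 < \<tau>" and \<zeta>: "0 < \<zeta>"
    and type: "cutout_type M F \<tau> \<zeta> mu N0 \<or> cell_type M F \<tau> \<zeta> mu N0"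
    and \<nu>_borel: "sets \<nu> = sets borel" and \<nu>_finite: "finite_measure \<nu>"
    and Proj_meas: "\<forall>t. Proj t \<in> borel_measurable \<nu>"
    and \<gamma>\<^sub>0: "0 < \<gamma>\<^sub>0" and C: "0 < C"
    and symdiff: "\<forall>\<Lambda>\<in>F. \<forall>t u.
       measure \<nu> ((Proj t -` \<Lambda> \<inter> space \<nu> - Proj u -` \<Lambda>) \<union> (Proj u -` \<Lambda> \<inter> space \<nu> - Proj t -` \<Lambda>))
         \<le> C * dist t u powr \<gamma>\<^sub>0"
  shows "\<exists>C'. AE \<omega> in M. \<forall>t u n. t \<noteq> u \<longrightarrow> N0 \<omega> \<le> n \<longrightarrow>
           \<bar>integral\<^sup>L (distr \<nu> borel (Proj t)) (mu n \<omega>) - integral\<^sup>L (distr \<nu> borel (Proj u)) (mu n \<omega>)\<bar>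
             / (2 powr ((\<tau> + \<zeta>) * real n) * dist t u powr \<gamma>\<^sub>0) \<le> C'"
proof -
  interpret fm: finite_measure \<nu> by fact
  have sd: "\<And>\<Lambda> t u. \<Lambda> \<in> F \<Longrightarrow> measure \<nu> (sdf \<nu> (Proj t) (Proj u) \<Lambda>) \<le> C * dist t u powr \<gamma>\<^sub>0"
    using symdiff unfolding sdf_def by blast
  have sdS: "\<And>S t u. S \<in> sets borel \<Longrightarrow> sdf \<nu> (Proj t) (Proj u) S \<in> sets \<nu>"
    using sdf_sets Proj_meas by blast
  have dl: "\<And>S t u. S \<in> sets borel \<Longrightarrow> \<bar>measure \<nu> (Proj t -` S \<inter> space \<nu>) - measure \<nu> (Proj u -` S \<inter> space \<nu>)\<bar>
      \<le> measure \<nu> (sdf \<nu> (Proj t) (Proj u) S)"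
    using diff_le \<nu>_finite Proj_meas by blast
  have ii: "\<And>S t. S \<in> sets borel \<Longrightarrow> integral\<^sup>L (distr \<nu> borel (Proj t)) (indicator S) = measure \<nu> (Proj t -` S \<inter> space \<nu>)"
    using int_ind Proj_meas by blast
  have dpos: "\<And>t u::'g. t \<noteq> u \<Longrightarrow> 0 < dist t u powr \<gamma>\<^sub>0" by simp
  from type show ?thesis
  proof
    assume "cutout_type M F \<tau> \<zeta> mu N0"
    then obtain C0 \<Omega> Lam Mn where C0: "C0 > 0" and \<Omega>: "\<Omega> \<in> F"
      and rep: "\<forall>n. \<forall>\<omega>\<in>space M. (\<forall>j\<in>{1..Mn n \<omega>}. Lam n \<omega> j \<in> F) \<and>
              mu n \<omega> = (\<lambda>x. 2 powr (\<tau> * real n) *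
                 indicator (\<Omega> - (\<Union>j\<in>{1..Mn n \<omega>}. Lam n \<omega> j)) x)"
      and AEM: "AE \<omega> in M. \<forall>n\<ge>N0 \<omega>. real (Mn n \<omega>) \<le> C0 * 2 powr (\<zeta> * real n)"
      unfolding cutout_type_def by blast
    show ?thesis
    proof (intro exI[of _ "(1 + C0) * C"])
      show "AE \<omega> in M. \<forall>t u n. t \<noteq> u \<longrightarrow> N0 \<omega> \<le> n \<longrightarrow>
           \<bar>integral\<^sup>L (distr \<nu> borel (Proj t)) (mu n \<omega>) - integral\<^sup>L (distr \<nu> borel (Proj u)) (mu n \<omega>)\<bar>
             / (2 powr ((\<tau> + \<zeta>) * real n) * dist t u powr \<gamma>\<^sub>0) \<le> (1 + C0) * C"
        using AEM AE_space
      proof eventually_elim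
        case (elim \<omega>)
        show ?case
        proof (intro allI impI)
          fix t u :: 'g and n assume tu: "t \<noteq> u" and n: "N0 \<omega> \<le> n"
          define a where "a = 2 powr (\<tau> * real n)"
          define b where "b = 2 powr (\<zeta> * real n)"
          define \<delta> where "\<delta> = dist t u powr \<gamma>\<^sub>0"
          define J where "J = {1..Mn n \<omega>}"
          define A where "A = \<Omega> - (\<Union>j\<in>J. Lam n \<omega> j)"
          have LF: "\<And>j. j \<in> J \<Longrightarrow> Lam n \<omega> j \<in> F" using rep elim unfolding J_def by blast
          have mu: "mu n \<omega> = (\<lambda>x. a * indicator A x)" using rep elim unfolding A_def a_def J_def by blast
          have LB: "\<And>j. j \<in> J \<Longrightarrow> Lam n \<omega> j \<in> sets borel" using LF F_borel by blast
          have Ab: "A \<in> sets borel" unfolding A_def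
            by (intro sets.Diff sets.finite_UN) (use LB \<Omega> F_borel J_def in auto)
          have \<delta>: "0 < \<delta>" unfolding \<delta>_def using tu by simp
          have b1: "1 \<le> b" unfolding b_def using \<zeta> by (intro ge_one_powr_ge_zero) auto
          have a0: "0 < a" unfolding a_def by simp
          have Mn: "real (Mn n \<omega>) \<le> C0 * b" using elim n unfolding b_def by blast
          have "sdf \<nu> (Proj t) (Proj u) A \<subseteq> sdf \<nu> (Proj t) (Proj u) \<Omega> \<union> (\<Union>j\<in>J. sdf \<nu> (Proj t) (Proj u) (Lam n \<omega> j))"
            unfolding A_def sdf_def by blast
          hence "measure \<nu> (sdf \<nu> (Proj t) (Proj u) A) \<le> measure \<nu> (sdf \<nu> (Proj t) (Proj u) \<Omega> \<union> (\<Union>j\<in>J. sdf \<nu> (Proj t) (Proj u) (Lam n \<omega> j)))"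
            by (intro fm.finite_measure_mono sets.Un sets.finite_UN) (use sdS \<Omega> F_borel LB in \<open>auto simp: J_def\<close>)
          also have "\<dots> \<le> measure \<nu> (sdf \<nu> (Proj t) (Proj u) \<Omega>) + measure \<nu> (\<Union>j\<in>J. sdf \<nu> (Proj t) (Proj u) (Lam n \<omega> j))"
            by (intro measure_Un_le sets.finite_UN) (use sdS \<Omega> F_borel LB in \<open>auto simp: J_def\<close>)
          also have "\<dots> \<le> C * \<delta> + (\<Sum>j\<in>J. measure \<nu> (sdf \<nu> (Proj t) (Proj u) (Lam n \<omega> j)))"
          proof -
            have fJ: "finite J" unfolding J_def by simp
            have "measure \<nu> (\<Union>j\<in>J. sdf \<nu> (Proj t) (Proj u) (Lam n \<omega> j)) \<le> (\<Sum>j\<in>J. measure \<nu> (sdf \<nu> (Proj t) (Proj u) (Lam n \<omega> j)))"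
              by (rule measure_UNION_le[OF fJ]) (rule sdS[OF LB])
            moreover have "measure \<nu> (sdf \<nu> (Proj t) (Proj u) \<Omega>) \<le> C * \<delta>"
              unfolding \<delta>_def by (rule sd[OF \<Omega>])
            ultimately show ?thesis by linarith
          qed
          also have "\<dots> \<le> C * \<delta> + (\<Sum>j\<in>J. C * \<delta>)"
            using sd LF unfolding \<delta>_def by (intro add_left_mono sum_mono) auto
          also have "\<dots> = C * \<delta> * (1 + real (Mn n \<omega>))" unfolding J_def by (simp add: algebra_simps)
          also have "\<dots> \<le> C * \<delta> * (b + C0 * b)"
            using Mn b1 C \<delta> by (intro mult_left_mono) auto
          finally have m: "measure \<nu> (sdf \<nu> (Proj t) (Proj u) A) \<le> C * \<delta> * (b + C0 * b)" .
          have "\<bar>integral\<^sup>L (distr \<nu> borel (Proj t)) (mu n \<omega>) - integral\<^sup>L (distr \<nu> borel (Proj u)) (mu n \<omega>)\<bar>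
              = a * \<bar>measure \<nu> (Proj t -` A \<inter> space \<nu>) - measure \<nu> (Proj u -` A \<inter> space \<nu>)\<bar>"
            unfolding mu using ii[OF Ab] a0 by (simp add: right_diff_distrib[symmetric] abs_mult)
          also have "\<dots> \<le> a * (C * \<delta> * (b + C0 * b))"
            using dl[OF Ab, of t u] m a0 by (intro mult_left_mono) auto
          also have "\<dots> = a * b * ((1 + C0) * C) * \<delta>" by (simp add: algebra_simps)
          finally show "\<bar>integral\<^sup>L (distr \<nu> borel (Proj t)) (mu n \<omega>) - integral\<^sup>L (distr \<nu> borel (Proj u)) (mu n \<omega>)\<bar>
             / (2 powr ((\<tau> + \<zeta>) * real n) * dist t u powr \<gamma>\<^sub>0) \<le> (1 + C0) * C"
            unfolding \<delta>_def by (rule final_arith) (use \<delta> in \<open>auto simp: a_def b_def \<delta>_def\<close>)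
        qed
      qed
    qed
  next
    assume "cell_type M F \<tau> \<zeta> mu N0"
    then obtain C0 Fm c Mn where C0: "C0 > 0"
      and rep: "\<forall>n. \<forall>\<omega>\<in>space M. (\<forall>j\<in>{1..Mn n \<omega>}. Fm n \<omega> j \<in> F) \<and>
              mu n \<omega> = (\<lambda>x. \<Sum>j\<in>{1..Mn n \<omega>}. c n \<omega> j * indicator (Fm n \<omega> j) x)"
      and AEc: "AE \<omega> in M. \<forall>n j. 0 \<le> c n \<omega> j \<and> c n \<omega> j \<le> C0 * 2 powr (\<tau> * real n)"
      and AEM: "AE \<omega> in M. \<forall>n\<ge>N0 \<omega>. real (Mn n \<omega>) \<le> C0 * 2 powr (\<zeta> * real n)"
      unfolding cell_type_def by blast
    show ?thesis
    proof (intro exI[of _ "C0 * C0 * C"])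
      show "AE \<omega> in M. \<forall>t u n. t \<noteq> u \<longrightarrow> N0 \<omega> \<le> n \<longrightarrow>
           \<bar>integral\<^sup>L (distr \<nu> borel (Proj t)) (mu n \<omega>) - integral\<^sup>L (distr \<nu> borel (Proj u)) (mu n \<omega>)\<bar>
             / (2 powr ((\<tau> + \<zeta>) * real n) * dist t u powr \<gamma>\<^sub>0) \<le> C0 * C0 * C"
        using AEM AEc AE_space
      proof eventually_elim
        case (elim \<omega>)
        show ?case
        proof (intro allI impI)
          fix t u :: 'g and n assume tu: "t \<noteq> u" and n: "N0 \<omega> \<le> n"
          define a where "a = 2 powr (\<tau> * real n)"
          define b where "b = 2 powr (\<zeta> * real n)"
          define \<delta> where "\<delta> = dist t u powr \<gamma>\<^sub>0"
          define J where "J = {1..Mn n \<omega>}"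
          have LF: "\<And>j. j \<in> J \<Longrightarrow> Fm n \<omega> j \<in> F" using rep elim unfolding J_def by blast
          have LB: "\<And>j. j \<in> J \<Longrightarrow> Fm n \<omega> j \<in> sets borel" using LF F_borel by blast
          have mu: "mu n \<omega> = (\<lambda>x. \<Sum>j\<in>J. c n \<omega> j * indicator (Fm n \<omega> j) x)" using rep elim unfolding J_def by blast
          have \<delta>: "0 < \<delta>" unfolding \<delta>_def using tu by simp
          have a0: "0 < a" unfolding a_def by simp
          have cb: "\<And>j. 0 \<le> c n \<omega> j \<and> c n \<omega> j \<le> C0 * a" using elim unfolding a_def by blast
          have Mn: "real (Mn n \<omega>) \<le> C0 * b" using elim n unfolding b_def by blast
          have I: "integral\<^sup>L (distr \<nu> borel (Proj t)) (mu n \<omega>) = (\<Sum>j\<in>J. c n \<omega> j * measure \<nu> (Proj t -` Fm n \<omega> j \<inter> space \<nu>))" for t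
          proof -
            interpret fd: finite_measure "distr \<nu> borel (Proj t)"
              by (rule fm.finite_measure_distr) (use Proj_meas in blast)
            have "integral\<^sup>L (distr \<nu> borel (Proj t)) (mu n \<omega>) = (\<Sum>j\<in>J. integral\<^sup>L (distr \<nu> borel (Proj t)) (\<lambda>x. c n \<omega> j * indicator (Fm n \<omega> j) x))"
              unfolding mu
              proof (rule Bochner_Integration.integral_sum[of J "distr \<nu> borel (Proj t)" "\<lambda>j x. c n \<omega> j * indicator (Fm n \<omega> j) x"])
                fix j assume j: "j \<in> J"
                have "Fm n \<omega> j \<in> sets (distr \<nu> borel (Proj t))" using LB[OF j] by simp
                then have "integrable (distr \<nu> borel (Proj t)) (indicator (Fm n \<omega> j) :: 'a \<Rightarrow> real)"
                  using fd.emeasure_finite[of "Fm n \<omega> j"] by (intro integrable_real_indicator) (simp_all add: less_top[symmetric])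
                then show "integrable (distr \<nu> borel (Proj t)) (\<lambda>x. c n \<omega> j * indicator (Fm n \<omega> j) x)"
                  by (rule integrable_mult_right)
              qed
            also have "\<dots> = (\<Sum>j\<in>J. c n \<omega> j * measure \<nu> (Proj t -` Fm n \<omega> j \<inter> space \<nu>))"
              proof (rule sum.cong[OF refl])
              fix j assume j: "j \<in> J"
              show "integral\<^sup>L (distr \<nu> borel (Proj t)) (\<lambda>x. c n \<omega> j * indicator (Fm n \<omega> j) x) = c n \<omega> j * measure \<nu> (Proj t -` Fm n \<omega> j \<inter> space \<nu>)"
                using ii[OF LB[OF j], of t] by (simp only: integral_mult_right_zero)
            qed
            finally show ?thesis .
          qed
          have "\<bar>integral\<^sup>L (distr \<nu> borel (Proj t)) (mu n \<omega>) - integral\<^sup>L (distr \<nu> borel (Proj u)) (mu n \<omega>)\<bar>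
              = \<bar>\<Sum>j\<in>J. c n \<omega> j * (measure \<nu> (Proj t -` Fm n \<omega> j \<inter> space \<nu>) - measure \<nu> (Proj u -` Fm n \<omega> j \<inter> space \<nu>))\<bar>"
            unfolding I sum_subtractf[symmetric] right_diff_distrib ..
          also have "\<dots> \<le> (\<Sum>j\<in>J. \<bar>c n \<omega> j * (measure \<nu> (Proj t -` Fm n \<omega> j \<inter> space \<nu>) - measure \<nu> (Proj u -` Fm n \<omega> j \<inter> space \<nu>))\<bar>)"
            by (rule sum_abs)
          also have "\<dots> \<le> (\<Sum>j\<in>J. (C0 * a) * (C * \<delta>))"
          proof (rule sum_mono)
            fix j assume j: "j \<in> J"
            have "\<bar>measure \<nu> (Proj t -` Fm n \<omega> j \<inter> space \<nu>) - measure \<nu> (Proj u -` Fm n \<omega> j \<inter> space \<nu>)\<bar> \<le> C * \<delta>"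
              using dl[OF LB[OF j], of t u] sd[OF LF[OF j], of t u] unfolding \<delta>_def by linarith
            then show "\<bar>c n \<omega> j * (measure \<nu> (Proj t -` Fm n \<omega> j \<inter> space \<nu>) - measure \<nu> (Proj u -` Fm n \<omega> j \<inter> space \<nu>))\<bar> \<le> (C0 * a) * (C * \<delta>)"
              unfolding abs_mult using cb[of j] by (intro mult_mono) auto
          qed
          also have "\<dots> = real (Mn n \<omega>) * ((C0 * a) * (C * \<delta>))" unfolding J_def by simp
          also have "\<dots> \<le> (C0 * b) * ((C0 * a) * (C * \<delta>))"
            using Mn C0 a0 C \<delta> by (intro mult_right_mono) auto
          also have "\<dots> = a * b * (C0 * C0 * C) * \<delta>" by (simp add: algebra_simps)
          finally show "\<bar>integral\<^sup>L (distr \<nu> borel (Proj t)) (mu n \<omega>) - integral\<^sup>L (distr \<nu> borel (Proj u)) (mu n \<omega>)\<bar>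
             / (2 powr ((\<tau> + \<zeta>) * real n) * dist t u powr \<gamma>\<^sub>0) \<le> C0 * C0 * C"
            unfolding \<delta>_def by (rule final_arith) (use \<delta> in \<open>auto simp: a_def b_def \<delta>_def\<close>)
        qed
      qed
    qed
  qed
qed

end
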